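(* For each $d\ge0$ and standard basis $\{v_i\}_{i=0}^d$ of $\mathcal V(d)$, $$Pv_0=\sum_{i=0}^d v_i,\qquad P^2v_0=\sum_{i=0}^d Pv_i,\qquad (-1)^dv_0=\sum_{i=0}^d P^2v_i.$$
   Context: $\mathbb F$ is a field of characteristic zero, $\mathfrak{sl}_2$ the Lie algebra of $2\times2$ trace-zero matrices over $\mathbb F$, with $e=\begin{pmatrix}0&1\\0&0\end{pmatrix}$, $f=\begin{pmatrix}0&0\\1&0\end{pmatrix}$, $h=\begin{pmatrix}1&0\\0&-1\end{pmatrix}$. $\mathcal V(d)$ is the $(d+1)$-dimensional irreducible $\mathfrak{sl}_2$-module; a standard basis $\{v_i\}_{i=0}^d$ satisfies $h.v_i=(d-2i)v_i$, $f.v_i=(i+1)v_{i+1}$, $e.v_i=(d-i+1)v_{i-1}$, $v_{-1}=v_{d+1}=0$; $\varphi_d$ is the corresponding representation. Put $x^*=h-e+f$, $y^*=f$ (nilpotent) and $P=\exp(\varphi_d(x^* ))\exp(\varphi_d(y^* ))$, where $\exp(\varphi_d(u))=\sum_n\varphi_d(u)^n/n!$. *)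

theory Defs
  imports "Jordan_Normal_Form.Matrix"
begin

definition sl2_e :: "'a::field mat" where
  "sl2_e = mat 2 2 (\<lambda>(i,j). if i = 0 \<and> j = 1 then 1 else 0)"
definition sl2_f :: "'a::field mat" where
  "sl2_f = mat 2 2 (\<lambda>(i,j). if i = 1 \<and> j = 0 then 1 else 0)"
definition sl2_h :: "'a::field mat" where
  "sl2_h = mat 2 2 (\<lambda>(i,j). if i = j then (if i = 0 then 1 else -1) else 0)"

text \<open>Action of e, f, h on V(d) = F^(d+1) w.r.t. the standard basis v_0..v_d
  (v_i is the i-th unit vector): h.v_i=(d-2i)v_i, f.v_i=(i+1)v_(i+1),
  e.v_i=(d-i+1)v_(i-1). Matrix entry (r,c) is the r-th coordinate of the image of v_c.\<close>
definition rep_h :: "nat \<Rightarrow> 'a::field_char_0 mat" where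
  "rep_h d = mat (d+1) (d+1) (\<lambda>(r,c). if r = c then of_int (int d - 2 * int c) else 0)"
definition rep_f :: "nat \<Rightarrow> 'a::field_char_0 mat" where
  "rep_f d = mat (d+1) (d+1) (\<lambda>(r,c). if r = c + 1 then of_nat (c + 1) else 0)"
definition rep_e :: "nat \<Rightarrow> 'a::field_char_0 mat" where
  "rep_e d = mat (d+1) (d+1) (\<lambda>(r,c). if c = r + 1 then of_nat (d - c + 1) else 0)"

text \<open>The representation phi_d, extended linearly: X = a h + b e + c f for trace-zero X.\<close>
definition phi :: "nat \<Rightarrow> 'a::field_char_0 mat \<Rightarrow> 'a mat" where
  "phi d X = X $$ (0,0) \<cdot>\<^sub>m rep_h d + X $$ (0,1) \<cdot>\<^sub>m rep_e d + X $$ (1,0) \<cdot>\<^sub>m rep_f d"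

text \<open>Exponential of a nilpotent square matrix: the series sum A^n/n!, which is a
  finite sum since A^k = 0 for k beyond the nilpotency index.\<close>
definition mexp :: "'a::field_char_0 mat \<Rightarrow> 'a mat" where
  "mexp A = mat (dim_row A) (dim_col A)
     (\<lambda>(i,j). \<Sum>n < (LEAST k. A ^\<^sub>m k = 0\<^sub>m (dim_row A) (dim_col A)).
                 (A ^\<^sub>m n) $$ (i,j) / fact n)"

definition xstar :: "'a::field mat" where "xstar = sl2_h - sl2_e + sl2_f"
definition ystar :: "'a::field mat" where "ystar = sl2_f"

definition Pmat :: "nat \<Rightarrow> 'a::field_char_0 mat" where
  "Pmat d = mexp (phi d xstar) * mexp (phi d ystar)"

definition vb :: "nat \<Rightarrow> nat \<Rightarrow> 'a::field_char_0 vec" where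
  "vb d i = unit_vec (d+1) i"
definition vsum :: "nat \<Rightarrow> (nat \<Rightarrow> 'a::field_char_0 vec) \<Rightarrow> 'a vec" where
  "vsum d g = vec (d+1) (\<lambda>r. \<Sum>i\<le>d. g i $ r)"

end

theory Submission
  imports Defs
begin

lemma mexp_eq:
  fixes A :: "'a::field_char_0 mat"
  assumes A: "A \<in> carrier_mat n n" and Z: "A ^\<^sub>m m = 0\<^sub>m n n"
  shows "mexp A = mat n n (\<lambda>(i,j). \<Sum>k<m. (A ^\<^sub>m k) $$ (i,j) / fact k)"
proof -
  have dr: "dim_row A = n" "dim_col A = n" using A by auto
  define L where "L = (LEAST k. A ^\<^sub>m k = 0\<^sub>m n n)"
  have LZ: "A ^\<^sub>m L = 0\<^sub>m n n" unfolding L_def by (rule LeastI[of _ m], rule Z)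
  have Lm: "L \<le> m" unfolding L_def by (rule Least_le, rule Z)
  have big: "A ^\<^sub>m (L + j) = 0\<^sub>m n n" for j
    by (induct j, use LZ A in auto)
  have "(\<Sum>k<m. (A ^\<^sub>m k) $$ (i,j) / fact k) = (\<Sum>k<L. (A ^\<^sub>m k) $$ (i,j) / fact k)"
    if "i < n" "j < n" for i j
  proof -
    have "(\<Sum>k<m. (A ^\<^sub>m k) $$ (i,j) / fact k) = (\<Sum>k<L. (A ^\<^sub>m k) $$ (i,j) / fact k)
        + (\<Sum>k\<in>{L..<m}. (A ^\<^sub>m k) $$ (i,j) / fact k)"
      using Lm by (metis (no_types) atLeast0LessThan sum.atLeastLessThan_concat zero_le)
    moreover have "(\<Sum>k\<in>{L..<m}. (A ^\<^sub>m k) $$ (i,j) / fact k) = 0"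
    proof (rule sum.neutral, intro ballI)
      fix k assume "k \<in> {L..<m}"
      then obtain t where "k = L + t" by (metis atLeastLessThan_iff le_add_diff_inverse)
      then show "(A ^\<^sub>m k) $$ (i,j) / fact k = 0" using big[of t] that by simp
    qed
    ultimately show ?thesis by simp
  qed
  then show ?thesis unfolding mexp_def dr L_def[symmetric]
    by (intro eq_matI) auto
qed

lemma sum_mat_mult_right:
  fixes A :: "nat \<Rightarrow> 'a::field mat"
  assumes "\<And>k. A k \<in> carrier_mat n n" "B \<in> carrier_mat n n" "i < n" "j < n"
  shows "(mat n n (\<lambda>(i,j). \<Sum>k<m. (A k) $$ (i,j) / c k) * B) $$ (i,j)
       = (\<Sum>k<m. (A k * B) $$ (i,j) / c k)"
proof -
  have "(mat n n (\<lambda>(i,j). \<Sum>k<m. (A k) $$ (i,j) / c k) * B) $$ (i,j)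
     = (\<Sum>l<n. (\<Sum>k<m. (A k) $$ (i,l) / c k) * B $$ (l,j))"
    using assms by (simp add: scalar_prod_def atLeast0LessThan)
  also have "\<dots> = (\<Sum>k<m. (\<Sum>l<n. (A k) $$ (i,l) * B $$ (l,j)) / c k)"
    by (simp add: sum_distrib_right sum_divide_distrib, subst sum.swap, simp add: algebra_simps)
  also have "\<dots> = (\<Sum>k<m. (A k * B) $$ (i,j) / c k)"
  proof (intro sum.cong refl)
    fix k have "A k \<in> carrier_mat n n" by (rule assms(1))
    then show "(\<Sum>l<n. (A k) $$ (i,l) * B $$ (l,j)) / c k = (A k * B) $$ (i,j) / c k"
      using assms(2-4) carrier_matD[OF assms(1)[of k]] carrier_matD[OF assms(2)]
      by (simp add: scalar_prod_def atLeast0LessThan)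
  qed
  finally show ?thesis .
qed

lemma sum_mat_mult_left:
  fixes A :: "nat \<Rightarrow> 'a::field mat"
  assumes "\<And>k. A k \<in> carrier_mat n n" "B \<in> carrier_mat n n" "i < n" "j < n"
  shows "(B * mat n n (\<lambda>(i,j). \<Sum>k<m. (A k) $$ (i,j) / c k)) $$ (i,j)
       = (\<Sum>k<m. (B * A k) $$ (i,j) / c k)"
proof -
  have "(B * mat n n (\<lambda>(i,j). \<Sum>k<m. (A k) $$ (i,j) / c k)) $$ (i,j)
     = (\<Sum>l<n. B $$ (i,l) * (\<Sum>k<m. (A k) $$ (l,j) / c k))"
    using assms by (simp add: scalar_prod_def atLeast0LessThan)
  also have "\<dots> = (\<Sum>k<m. (\<Sum>l<n. B $$ (i,l) * (A k) $$ (l,j)) / c k)"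
    by (simp add: sum_distrib_left sum_divide_distrib, subst sum.swap, simp add: algebra_simps)
  also have "\<dots> = (\<Sum>k<m. (B * A k) $$ (i,j) / c k)"
  proof (intro sum.cong refl)
    fix k have "A k \<in> carrier_mat n n" by (rule assms(1))
    then show "(\<Sum>l<n. B $$ (i,l) * (A k) $$ (l,j)) / c k = (B * A k) $$ (i,j) / c k"
      using assms(2-4) carrier_matD[OF assms(1)[of k]] carrier_matD[OF assms(2)]
      by (simp add: scalar_prod_def atLeast0LessThan)
  qed
  finally show ?thesis .
qed

definition Xm :: "nat \<Rightarrow> 'a::field_char_0 mat" where
  "Xm d = mat (d+1) (d+1) (\<lambda>(r,c). (if r = c then of_int (int d - 2 * int c) else 0)
     - (if c = r + 1 then of_nat (d - c + 1) else 0) + (if r = c + 1 then of_nat (c + 1) else 0))"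

lemma phi_x: "phi d xstar = (Xm d :: 'a::field_char_0 mat)"
  unfolding phi_def xstar_def Xm_def rep_h_def rep_e_def rep_f_def sl2_h_def sl2_e_def sl2_f_def
  by (rule eq_matI) auto

lemma phi_y: "phi d ystar = (rep_f d :: 'a::field_char_0 mat)"
  unfolding phi_def ystar_def rep_h_def rep_e_def rep_f_def sl2_f_def
  by (rule eq_matI) auto

lemma rep_f_carrier[simp]: "rep_f d \<in> carrier_mat (d+1) (d+1)"
  unfolding rep_f_def by auto
lemma Xm_carrier[simp]: "Xm d \<in> carrier_mat (d+1) (d+1)"
  unfolding Xm_def by auto

lemma fact_aux: "(fact r :: 'a::field_char_0) / fact (Suc c) * (of_nat c + 1) = fact r / fact c"
proof -
  have a: "(of_nat c + 1 :: 'a) \<noteq> 0" using of_nat_neq_0[of c, where ?'a='a] by (simp add: add.commute)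
  have "fact (Suc c) = (of_nat c + 1) * (fact c :: 'a)" by (simp add: fact_Suc)
  then have "(fact r :: 'a) / fact (Suc c) * (of_nat c + 1) = fact r / fact c / (of_nat c + 1) * (of_nat c + 1)"
    by (simp only: divide_divide_eq_left mult.commute)
  also have "\<dots> = fact r / fact c" using a by simp
  finally show ?thesis .
qed

lemma F_pow:
  assumes "r < d+1" "c < d+1"
  shows "(rep_f d ^\<^sub>m k :: 'a::field_char_0 mat) $$ (r,c)
     = (if r = c + k then of_nat (fact r) / of_nat (fact c) else 0)"
  using assms
proof (induct k arbitrary: r c)
  case 0
  then show ?case by (simp add: rep_f_def)
next
  case (Suc k)
  have "(rep_f d ^\<^sub>m Suc k :: 'a mat) $$ (r,c)
      = (\<Sum>j<d+1. (rep_f d ^\<^sub>m k :: 'a mat) $$ (r,j) * (rep_f d :: 'a mat) $$ (j,c))"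
    using Suc.prems by (simp add: scalar_prod_def atLeast0LessThan rep_f_def)
  also have "\<dots> = (\<Sum>j<d+1. if j = c + 1 then (if r = c + 1 + k then of_nat (fact r) / of_nat (fact c) else 0) else 0)"
  proof (intro sum.cong refl)
    fix j assume j: "j \<in> {..<d+1}"
    show "(rep_f d ^\<^sub>m k :: 'a mat) $$ (r,j) * (rep_f d :: 'a mat) $$ (j,c)
      = (if j = c + 1 then (if r = c + 1 + k then of_nat (fact r) / of_nat (fact c) else 0) else 0)"
    proof (cases "j = c + 1")
      case True
      have "(rep_f d ^\<^sub>m k :: 'a mat) $$ (r,j) = (if r = j + k then of_nat (fact r) / of_nat (fact j) else 0)"
        using Suc j by simp
      moreover have "(rep_f d :: 'a mat) $$ (j,c) = of_nat c + 1" using True Suc.prems j by (simp add: rep_f_def)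
      ultimately show ?thesis using True fact_aux[of r c, where 'a='a] of_nat_neq_0[of c, where 'a='a]
        by (simp only: of_nat_fact) (simp add: add.commute)
    next
      case False
      then show ?thesis using Suc.prems j by (simp add: rep_f_def)
    qed
  qed
  also have "\<dots> = (if r = c + Suc k then of_nat (fact r) / of_nat (fact c) else 0)"
    using Suc.prems by auto
  finally show ?case .
qed

lemma F_nil: "(rep_f d ^\<^sub>m (d+1) :: 'a::field_char_0 mat) = 0\<^sub>m (d+1) (d+1)"
proof (rule eq_matI)
  fix i j assume "i < dim_row (0\<^sub>m (d+1) (d+1) :: 'a mat)" "j < dim_col (0\<^sub>m (d+1) (d+1) :: 'a mat)"
  then have ij: "i < d+1" "j < d+1" by auto
  have "(rep_f d ^\<^sub>m (d+1) :: 'a mat) $$ (i,j) = (if i = j + (d+1) then of_nat (fact i) / of_nat (fact j) else 0)"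
    by (rule F_pow[OF ij])
  then show "(rep_f d ^\<^sub>m (d+1) :: 'a mat) $$ (i,j) = 0\<^sub>m (d+1) (d+1) $$ (i,j)" using ij by simp
qed (auto simp: rep_f_def)

definition EF :: "nat \<Rightarrow> 'a::field_char_0 mat" where
  "EF d = mat (d+1) (d+1) (\<lambda>(r,c). if c \<le> r then of_nat (r choose c) else 0)"

lemma expF: "mexp (rep_f d) = (EF d :: 'a::field_char_0 mat)"
proof -
  have "mexp (rep_f d) = (mat (d+1) (d+1) (\<lambda>(i,j). \<Sum>k<d+1. (rep_f d ^\<^sub>m k :: 'a mat) $$ (i,j) / fact k))"
    by (rule mexp_eq[OF rep_f_carrier F_nil])
  also have "\<dots> = EF d"
  proof (rule eq_matI)
    fix i j assume ij: "i < dim_row (EF d :: 'a mat)" "j < dim_col (EF d :: 'a mat)"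
    then have ij': "i < d+1" "j < d+1" by (auto simp: EF_def)
    have "(\<Sum>k<d+1. (rep_f d ^\<^sub>m k :: 'a mat) $$ (i,j) / fact k)
       = (\<Sum>k<d+1. if k = i - j \<and> j \<le> i then of_nat (fact i) / of_nat (fact j) / fact k else 0)"
      by (intro sum.cong refl) (use ij' in \<open>auto simp: F_pow\<close>)
    also have "\<dots> = (if j \<le> i then of_nat (i choose j) else 0)"
      using ij' by (auto simp: binomial_fact)
    finally show "mat (d+1) (d+1) (\<lambda>(i,j). \<Sum>k<d+1. (rep_f d ^\<^sub>m k :: 'a mat) $$ (i,j) / fact k) $$ (i,j) = EF d $$ (i,j)"
      using ij' by (simp add: EF_def)
  qed (auto simp: EF_def)
  finally show ?thesis .
qed

lemma absorb1: "Suc k * (n choose Suc k) = (n - k) * (n choose k)"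
proof (cases n)
  case 0 then show ?thesis by simp
next
  case (Suc m)
  then show ?thesis using Suc_times_binomial[of k m] binomial_absorb_comp[of n k] by simp
qed

lemma binom_core: "n * (n choose k) + r * (Suc n choose Suc k)
   = (r + k + 1) * (n choose Suc k) + r * (n choose k) + (if k = 0 then 0 else n * ((n-1) choose (k-1)))"
proof -
  have a: "(if k = 0 then 0 else n * ((n-1) choose (k-1))) = k * (n choose k)"
    using times_binomial_minus1_eq[of k n] by auto
  have b: "(k + 1) * (n choose Suc k) = (n - k) * (n choose k)" using absorb1[of k n] by simp
  have c: "(n - k) * (n choose k) + k * (n choose k) = n * (n choose k)"
  proof (cases "k \<le> n")
    case True then show ?thesis by (simp add: add_mult_distrib[symmetric])
  next
    case False then show ?thesis by (simp add: binomial_eq_0)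
  qed
  have "n * (n choose k) + r * (Suc n choose Suc k) = r * (n choose Suc k) + r * (n choose k) + n * (n choose k)"
    by (simp add: algebra_simps)
  also have "\<dots> = r * (n choose Suc k) + r * (n choose k) + (k + 1) * (n choose Suc k) + k * (n choose k)"
    using b c by simp
  also have "\<dots> = (r + k + 1) * (n choose Suc k) + r * (n choose k) + k * (n choose k)"
    by (simp add: algebra_simps)
  finally show ?thesis unfolding a .
qed

definition Sf :: "nat \<Rightarrow> nat \<Rightarrow> nat \<Rightarrow> 'a::field_char_0" where
  "Sf d r c = (if r \<le> c then of_nat ((d - r) choose (c - r)) else 0)"

lemma XS_entry:
  assumes "r \<le> d" "c \<le> d"
  shows "of_int (int d - 2 * int r) * Sf d r c - of_nat (d - r) * Sf d (Suc r) c + of_nat r * Sf d (r - 1) c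
     = (Sf d r (Suc c) * of_nat (Suc c) :: 'a::field_char_0)"
proof -
  consider "Suc c < r" | "Suc c = r" | "r \<le> c" by linarith
  then show ?thesis
  proof cases
    case 1
    then have "\<not> r - 1 \<le> c" "\<not> r \<le> c" "\<not> Suc r \<le> c" "\<not> r \<le> Suc c" by linarith+
    then show ?thesis by (simp add: Sf_def)
  next
    case 2 then show ?thesis by (simp add: Sf_def)
  next
    case 3
    then obtain k where k: "c = r + k" by (metis le_add_diff_inverse)
    define n where "n = d - r"
    have dn: "d = n + r" using assms n_def by simp
    have e1: "Sf d r c = (of_nat (n choose k) :: 'a)" using k by (simp add: Sf_def n_def)
    have e2: "of_nat (d - r) * Sf d (Suc r) c = (of_nat (if k = 0 then 0 else n * ((n-1) choose (k-1))) :: 'a)"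
      using k by (auto simp: Sf_def n_def diff_diff_add)
    have e3: "of_nat r * Sf d (r - 1) c = (of_nat (r * (Suc n choose Suc k)) :: 'a)"
    proof (cases r)
      case 0 then show ?thesis by simp
    next
      case (Suc q)
      have h1: "d - q = Suc n" using Suc assms n_def by simp
      have h2: "c - q = Suc k" using Suc k by simp
      have "Sf d (r - 1) c = (of_nat (Suc n choose Suc k) :: 'a)"
        using Suc k by (simp only: Sf_def h1 h2 diff_Suc_1 split: if_split) simp
      then show ?thesis by simp
    qed
    have e4: "Sf d r (Suc c) * of_nat (Suc c) = (of_nat ((r + k + 1) * (n choose Suc k)) :: 'a)"
      using k by (simp add: Sf_def n_def Suc_diff_le algebra_simps)
    have e5: "(of_int (int d - 2 * int r) :: 'a) = of_nat n - of_nat r" using dn by simp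
    have core: "(of_nat (n * (n choose k) + r * (Suc n choose Suc k)) :: 'a)
      = of_nat ((r + k + 1) * (n choose Suc k) + r * (n choose k) + (if k = 0 then 0 else n * ((n-1) choose (k-1))))"
      by (subst binom_core) (rule refl)
    show ?thesis unfolding e2 e3 e4 e5 e1 using core
      by (simp only: of_nat_add of_nat_mult) (simp add: algebra_simps)
  qed
qed

definition Sm :: "nat \<Rightarrow> 'a::field_char_0 mat" where
  "Sm d = mat (d+1) (d+1) (\<lambda>(r,c). Sf d r c)"

lemma Sm_carrier[simp]: "Sm d \<in> carrier_mat (d+1) (d+1)"
  unfolding Sm_def by auto

lemma Sm_carrier'[simp]: "Sm d \<in> carrier_mat (Suc d) (Suc d)"
  unfolding Sm_def by auto
lemma Xm_carrier'[simp]: "Xm d \<in> carrier_mat (Suc d) (Suc d)"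
  unfolding Xm_def by auto
lemma rep_f_carrier'[simp]: "rep_f d \<in> carrier_mat (Suc d) (Suc d)"
  unfolding rep_f_def by auto
lemma dims_misc[simp]: "dim_row (Xm d) = Suc d" "dim_col (Xm d) = Suc d"
  "dim_row (rep_f d) = Suc d" "dim_col (rep_f d) = Suc d"
  "dim_row (Sm d) = Suc d" "dim_col (Sm d) = Suc d"
  by (auto simp: Xm_def rep_f_def Sm_def)

lemma XS: "Xm d * Sm d = Sm d * (rep_f d :: 'a::field_char_0 mat)"
proof (rule eq_matI)
  fix r c assume rc: "r < dim_row (Sm d * (rep_f d :: 'a mat))" "c < dim_col (Sm d * (rep_f d :: 'a mat))"
  then have r: "r < d+1" and c: "c < d+1" by (auto simp: Sm_def rep_f_def)
  have "(Xm d * Sm d :: 'a mat) $$ (r,c) = (\<Sum>j<d+1. (Xm d :: 'a mat) $$ (r,j) * Sf d j c)"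
    using r c by (simp add: scalar_prod_def atLeast0LessThan Xm_def Sm_def)
  also have "\<dots> = (\<Sum>j<d+1. (if j = r then of_int (int d - 2 * int r) * Sf d r c else 0)
      - (if j = Suc r then of_nat (d - r) * Sf d (Suc r) c else 0)
      + (if j = r - 1 \<and> 0 < r then of_nat r * Sf d (r - 1) c else 0))"
    by (intro sum.cong refl) (use r c in \<open>auto simp: Xm_def of_nat_diff algebra_simps\<close>)
  also have "\<dots> = of_int (int d - 2 * int r) * Sf d r c - of_nat (d - r) * Sf d (Suc r) c + of_nat r * Sf d (r - 1) c"
    using r by (simp add: sum.distrib sum_subtractf)
  also have "\<dots> = Sf d r (Suc c) * of_nat (Suc c)"
    using r c by (intro XS_entry) auto
  also have "\<dots> = (\<Sum>j<d+1. Sf d r j * (rep_f d :: 'a mat) $$ (j,c))"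
  proof -
    have "(\<Sum>j<d+1. Sf d r j * (rep_f d :: 'a mat) $$ (j,c)) = (\<Sum>j<d+1. if j = Suc c then Sf d r (Suc c) * of_nat (Suc c) else 0)"
      by (intro sum.cong refl) (use c in \<open>auto simp: rep_f_def\<close>)
    also have "\<dots> = Sf d r (Suc c) * of_nat (Suc c)"
      using r c by (auto simp: Sf_def)
    finally show ?thesis by simp
  qed
  also have "\<dots> = (Sm d * (rep_f d :: 'a mat)) $$ (r,c)"
    using r c by (simp add: scalar_prod_def atLeast0LessThan Sm_def rep_f_def)
  finally show "(Xm d * Sm d :: 'a mat) $$ (r,c) = (Sm d * (rep_f d :: 'a mat)) $$ (r,c)" .
qed (auto simp: Sm_def Xm_def rep_f_def)

lemma XS_pow: "Xm d ^\<^sub>m k * Sm d = Sm d * (rep_f d ^\<^sub>m k :: 'a::field_char_0 mat)"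
proof (induct k)
  case 0 then show ?case by simp
next
  case (Suc k)
  have X: "Xm d \<in> carrier_mat (d+1) (d+1)" and S: "Sm d \<in> carrier_mat (d+1) (d+1)"
    and F: "(rep_f d :: 'a mat) \<in> carrier_mat (d+1) (d+1)" by auto
  have "Xm d ^\<^sub>m Suc k * Sm d = Xm d ^\<^sub>m k * (Xm d * (Sm d :: 'a mat))"
    using assoc_mult_mat[OF pow_carrier_mat[OF X] X S, of k] by simp
  also have "\<dots> = (Xm d ^\<^sub>m k * Sm d) * rep_f d" unfolding XS
    by (rule assoc_mult_mat[OF pow_carrier_mat[OF X] S F, symmetric])
  also have "\<dots> = Sm d * (rep_f d ^\<^sub>m k * rep_f d)" unfolding Suc
    by (rule assoc_mult_mat[OF S pow_carrier_mat[OF F] F])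
  finally show ?case by simp
qed

lemma tri_zero:
  assumes M: "M \<in> carrier_mat (d+1) (d+1)" and Z: "M * Sm d = (0\<^sub>m (d+1) (d+1) :: 'a::field_char_0 mat)"
  shows "M = 0\<^sub>m (d+1) (d+1)"
proof -
  have "\<forall>i < d+1. M $$ (i,c) = 0" if "c < d+1" for c
    using that
  proof (induct c rule: less_induct)
    case (less c)
    show ?case
    proof (intro allI impI)
      fix i assume i: "i < d+1"
      have "0 = (M * Sm d) $$ (i,c)" using Z i less by simp
      also have "\<dots> = (\<Sum>j<d+1. M $$ (i,j) * Sf d j c)"
        using M i less by (simp add: scalar_prod_def atLeast0LessThan Sm_def)
      also have "\<dots> = (\<Sum>j<d+1. if j = c then M $$ (i,c) else 0)"
      proof (intro sum.cong refl)
        fix j assume "j \<in> {..<d+1}"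
        show "M $$ (i,j) * Sf d j c = (if j = c then M $$ (i,c) else 0)"
          using less i by (cases "j < c") (auto simp: Sf_def)
      qed
      also have "\<dots> = M $$ (i,c)" using less by simp
      finally show "M $$ (i,c) = 0" by simp
    qed
  qed
  then show ?thesis using M by (intro eq_matI) auto
qed

lemma X_nil: "(Xm d ^\<^sub>m (d+1) :: 'a::field_char_0 mat) = 0\<^sub>m (d+1) (d+1)"
proof (rule tri_zero)
  show "(Xm d ^\<^sub>m (d+1) :: 'a mat) \<in> carrier_mat (d+1) (d+1)" by (rule pow_carrier_mat, simp)
  have "(Xm d ^\<^sub>m (d+1) :: 'a mat) * Sm d = Sm d * (rep_f d ^\<^sub>m (d+1))" by (rule XS_pow)
  also have "\<dots> = 0\<^sub>m (d+1) (d+1)" unfolding F_nil by simp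
  finally show "(Xm d ^\<^sub>m (d+1) :: 'a mat) * Sm d = 0\<^sub>m (d+1) (d+1)" .
qed

lemma expX_S: "mexp (Xm d) * Sm d = Sm d * (EF d :: 'a::field_char_0 mat)"
proof -
  have eX: "mexp (Xm d) = (mat (d+1) (d+1) (\<lambda>(i,j). \<Sum>k<d+1. (Xm d ^\<^sub>m k :: 'a mat) $$ (i,j) / fact k))"
    by (rule mexp_eq[OF Xm_carrier X_nil])
  have eF: "(EF d :: 'a mat) = (mat (d+1) (d+1) (\<lambda>(i,j). \<Sum>k<d+1. (rep_f d ^\<^sub>m k :: 'a mat) $$ (i,j) / fact k))"
    unfolding expF[symmetric] by (rule mexp_eq[OF rep_f_carrier F_nil])
  show ?thesis
  proof (rule eq_matI)
    fix i j assume "i < dim_row (Sm d * (EF d :: 'a mat))" "j < dim_col (Sm d * (EF d :: 'a mat))"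
    then have ij: "i < d+1" "j < d+1" by (auto simp: Sm_def EF_def)
    have "(mexp (Xm d) * Sm d) $$ (i,j) = (\<Sum>k<d+1. (Xm d ^\<^sub>m k * Sm d :: 'a mat) $$ (i,j) / fact k)"
      unfolding eX by (rule sum_mat_mult_right) (use ij in auto)
    also have "\<dots> = (\<Sum>k<d+1. (Sm d * rep_f d ^\<^sub>m k :: 'a mat) $$ (i,j) / fact k)"
      unfolding XS_pow ..
    also have "\<dots> = (Sm d * EF d) $$ (i,j)"
      unfolding eF by (rule sum_mat_mult_left[symmetric]) (use ij in auto)
    finally show "(mexp (Xm d) * Sm d :: 'a mat) $$ (i,j) = (Sm d * EF d) $$ (i,j)" .
  qed (auto simp: eX Sm_def EF_def)
qed

definition uv :: "nat \<Rightarrow> 'a::field_char_0 \<Rightarrow> 'a \<Rightarrow> 'a vec" where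
  "uv d a b = vec (d+1) (\<lambda>r. a ^ (d - r) * b ^ r)"

lemma uv_carrier[simp]: "uv d a b \<in> carrier_vec (Suc d)" "dim_vec (uv d a b) = Suc d"
  by (auto simp: uv_def)

lemma EF_u: "EF d *\<^sub>v uv d a b = uv d a (a + b)"
proof (rule eq_vecI)
  fix r assume "r < dim_vec (uv d a (a+b))"
  then have r: "r \<le> d" by simp
  have "(EF d *\<^sub>v uv d a b) $ r = (\<Sum>c<d+1. (if c \<le> r then of_nat (r choose c) * (a ^ (d - c) * b ^ c) else 0))"
    using r by (simp add: EF_def uv_def scalar_prod_def atLeast0LessThan) (auto intro!: sum.cong)
  also have "\<dots> = (\<Sum>c\<in>{..<d+1} \<inter> {c. c \<le> r}. of_nat (r choose c) * (a ^ (d - c) * b ^ c))"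
    by (simp add: sum.inter_restrict)
  also have "{..<d+1} \<inter> {c. c \<le> r} = {..r}" using r by auto
  also have "(\<Sum>c\<in>{..r}. of_nat (r choose c) * (a ^ (d - c) * b ^ c))
     = a ^ (d - r) * (\<Sum>c\<le>r. of_nat (r choose c) * b ^ c * a ^ (r - c))"
    unfolding sum_distrib_left
  proof (intro sum.cong refl)
    fix c assume "c \<in> {..r}"
    then have "a ^ (d - c) = a ^ (d - r) * a ^ (r - c)" using r by (simp add: power_add[symmetric])
    then show "of_nat (r choose c) * (a ^ (d - c) * b ^ c) = a ^ (d - r) * (of_nat (r choose c) * b ^ c * a ^ (r - c))"
      by (simp add: algebra_simps)
  qed
  also have "\<dots> = a ^ (d - r) * (b + a) ^ r" by (simp add: binomial_ring)
  finally show "(EF d *\<^sub>v uv d a b) $ r = uv d a (a + b) $ r" using r by (simp add: uv_def add.commute)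
qed (simp add: EF_def)

lemma S_u: "Sm d *\<^sub>v uv d a b = uv d (a + b) b"
proof (rule eq_vecI)
  fix r assume "r < dim_vec (uv d (a+b) b)"
  then have r: "r \<le> d" by simp
  have "(Sm d *\<^sub>v uv d a b) $ r = (\<Sum>c<d+1. (if r \<le> c then of_nat ((d - r) choose (c - r)) * (a ^ (d - c) * b ^ c) else 0))"
    using r by (simp add: Sm_def Sf_def uv_def scalar_prod_def atLeast0LessThan) (auto intro!: sum.cong)
  also have "\<dots> = (\<Sum>c\<in>{..<d+1} \<inter> {c. r \<le> c}. of_nat ((d - r) choose (c - r)) * (a ^ (d - c) * b ^ c))"
    by (simp add: sum.inter_restrict)
  also have "{..<d+1} \<inter> {c. r \<le> c} = {0 + r..(d - r) + r}" using r by auto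
  also have "(\<Sum>c\<in>{0 + r..(d - r) + r}. of_nat ((d - r) choose (c - r)) * (a ^ (d - c) * b ^ c))
     = (\<Sum>j\<in>{0..d - r}. of_nat ((d - r) choose j) * (a ^ (d - r - j) * b ^ (j + r)))"
    by (subst sum.shift_bounds_cl_nat_ivl) (simp add: diff_diff_add add.commute)
  also have "\<dots> = b ^ r * (\<Sum>j\<le>d - r. of_nat ((d - r) choose j) * b ^ j * a ^ (d - r - j))"
    unfolding sum_distrib_left atLeast0AtMost
    by (intro sum.cong refl) (simp add: power_add algebra_simps)
  also have "\<dots> = b ^ r * (b + a) ^ (d - r)" by (simp add: binomial_ring)
  finally show "(Sm d *\<^sub>v uv d a b) $ r = uv d (a + b) b $ r" using r by (simp add: uv_def add.commute mult.commute)
qed (simp add: Sm_def)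

lemma expX_carrier[simp]: "(mexp (Xm d) :: 'a::field_char_0 mat) \<in> carrier_mat (Suc d) (Suc d)"
  using mexp_eq[OF Xm_carrier X_nil, where 'a='a, of d] by simp

lemma EF_carrier[simp]: "EF d \<in> carrier_mat (Suc d) (Suc d)"
  by (simp add: EF_def)

lemma Pmat_eq: "Pmat d = mexp (Xm d) * (EF d :: 'a::field_char_0 mat)"
  unfolding Pmat_def phi_x phi_y expF ..

lemma Pmat_carrier[simp]: "(Pmat d :: 'a::field_char_0 mat) \<in> carrier_mat (Suc d) (Suc d)"
  unfolding Pmat_eq by (rule mult_carrier_mat[of _ "Suc d" "Suc d"]) simp_all

lemma P_u: "Pmat d *\<^sub>v uv d a b = uv d (a - b) (a :: 'a::field_char_0)"
proof -
  have "Pmat d *\<^sub>v uv d a b = mexp (Xm d) *\<^sub>v (EF d *\<^sub>v uv d a b)"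
    unfolding Pmat_eq by (rule assoc_mult_mat_vec[of _ "Suc d" "Suc d" _ "Suc d"]) simp_all
  also have "EF d *\<^sub>v uv d a b = Sm d *\<^sub>v uv d (- b) (a + b)"
    unfolding EF_u S_u by simp
  also have "mexp (Xm d) *\<^sub>v (Sm d *\<^sub>v uv d (- b) (a + b)) = (mexp (Xm d) * Sm d) *\<^sub>v uv d (- b) (a + b)"
    by (rule assoc_mult_mat_vec[of _ "Suc d" "Suc d" _ "Suc d", symmetric]) simp_all
  also have "\<dots> = (Sm d * EF d) *\<^sub>v uv d (- b) (a + b)" unfolding expX_S ..
  also have "\<dots> = Sm d *\<^sub>v (EF d *\<^sub>v uv d (- b) (a + b))"
    by (rule assoc_mult_mat_vec[of _ "Suc d" "Suc d" _ "Suc d"]) simp_all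
  also have "\<dots> = uv d (a - b) a" unfolding EF_u S_u by simp
  finally show ?thesis .
qed

lemma vb0: "vb d 0 = uv d 1 (0 :: 'a::field_char_0)"
  by (rule eq_vecI) (auto simp: vb_def uv_def)

lemma vsum_vb: "vsum d (vb d) = uv d 1 (1 :: 'a::field_char_0)"
proof (rule eq_vecI)
  fix r assume "r < dim_vec (uv d 1 (1::'a))"
  then have r: "r \<le> d" by simp
  have "(\<Sum>i\<le>d. vb d i $ r) = (\<Sum>i\<le>d. if i = r then (1::'a) else 0)"
    by (intro sum.cong refl) (use r in \<open>auto simp: vb_def\<close>)
  then show "vsum d (vb d) $ r = uv d 1 (1::'a) $ r" using r by (simp add: vsum_def uv_def)
qed (simp add: vsum_def)

lemma vsum_lin:
  fixes A :: "'a::field_char_0 mat"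
  assumes A: "A \<in> carrier_mat (Suc d) (Suc d)" and g: "\<And>i. g i \<in> carrier_vec (Suc d)"
  shows "vsum d (\<lambda>i. A *\<^sub>v g i) = A *\<^sub>v vsum d g"
proof (rule eq_vecI)
  fix r assume "r < dim_vec (A *\<^sub>v vsum d g)"
  then have r: "r < Suc d" using A by simp
  have dg: "\<And>i. dim_vec (g i) = Suc d" using g by (simp add: carrier_vecD)
  have "vsum d (\<lambda>i. A *\<^sub>v g i) $ r = (\<Sum>i\<le>d. \<Sum>j<Suc d. A $$ (r,j) * g i $ j)"
    using r A by (simp add: vsum_def scalar_prod_def atLeast0LessThan dg del: sum.lessThan_Suc)
  also have "\<dots> = (\<Sum>j<Suc d. A $$ (r,j) * (\<Sum>i\<le>d. g i $ j))"
    by (subst sum.swap) (simp add: sum_distrib_left)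
  also have "\<dots> = (A *\<^sub>v vsum d g) $ r"
    using r A by (simp add: vsum_def scalar_prod_def atLeast0LessThan)
  finally show "vsum d (\<lambda>i. A *\<^sub>v g i) $ r = (A *\<^sub>v vsum d g) $ r" .
qed (use A in \<open>simp add: vsum_def\<close>)

lemma vb_carrier[simp]: "vb d i \<in> carrier_vec (Suc d)"
  by (simp add: vb_def)

theorem corollary8p14:
  fixes d :: nat
  defines "P \<equiv> (Pmat d :: 'a::field_char_0 mat)"
  shows "P *\<^sub>v vb d 0 = vsum d (\<lambda>i. vb d i)
    \<and> (P * P) *\<^sub>v vb d 0 = vsum d (\<lambda>i. P *\<^sub>v vb d i)
    \<and> (-1) ^ d \<cdot>\<^sub>v (vb d 0 :: 'a vec) = vsum d (\<lambda>i. (P * P) *\<^sub>v vb d i)"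
proof -
  have PC: "P \<in> carrier_mat (Suc d) (Suc d)" unfolding P_def by simp
  have PPC: "P * P \<in> carrier_mat (Suc d) (Suc d)" using PC by simp
  have vs: "vsum d (\<lambda>i. vb d i) = uv d 1 (1::'a)" using vsum_vb[of d] by (simp add: eta_contract_eq)
  have 1: "P *\<^sub>v vb d 0 = uv d 1 1" unfolding P_def vb0 P_u by simp
  have 2: "(P * P) *\<^sub>v vb d 0 = P *\<^sub>v uv d 1 1"
    using assoc_mult_mat_vec[OF PC PC, of "vb d 0"] 1 by simp
  have 3: "P *\<^sub>v uv d 1 (1::'a) = uv d 0 1" unfolding P_def P_u by simp
  have 4: "P *\<^sub>v uv d 0 (1::'a) = uv d (-1) 0" unfolding P_def P_u by simp
  have 5: "uv d (-1) (0::'a) = (-1) ^ d \<cdot>\<^sub>v vb d 0"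
    by (rule eq_vecI) (auto simp: uv_def vb_def)
  show ?thesis
  proof (intro conjI)
    show "P *\<^sub>v vb d 0 = vsum d (\<lambda>i. vb d i)" using 1 vs by simp
    show "(P * P) *\<^sub>v vb d 0 = vsum d (\<lambda>i. P *\<^sub>v vb d i)"
      unfolding 2 vsum_lin[OF PC vb_carrier] vs ..
    have "vsum d (\<lambda>i. (P * P) *\<^sub>v vb d i) = (P * P) *\<^sub>v uv d 1 1"
      unfolding vsum_lin[OF PPC vb_carrier] vs ..
    also have "\<dots> = P *\<^sub>v (P *\<^sub>v uv d 1 1)"
      by (rule assoc_mult_mat_vec[OF PC PC]) simp
    also have "\<dots> = (-1) ^ d \<cdot>\<^sub>v vb d 0" unfolding 3 4 5 ..
    finally show "(-1) ^ d \<cdot>\<^sub>v (vb d 0 :: 'a vec) = vsum d (\<lambda>i. (P * P) *\<^sub>v vb d i)" by simp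
  qed
qed

end
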